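(* Suppose $n\ge 1$, $0<q\le 1$ and $\pi\sim\mu_{n,q}$. Then $$n(1-q)\le \mathbb{E}(\mathrm{LIS}(\pi))\le n-\frac{q}{1+q}(n-1).$$
   Context: For $q>0$ and an integer $n\ge1$, the Mallows measure $\mu_{n,q}$ on $S_n$ is $\mu_{n,q}(\pi)=q^{\mathrm{inv}(\pi)}/Z_{n,q}$, where $\mathrm{inv}(\pi)$ is the number of pairs $i<j$ with $\pi(i)>\pi(j)$ and $Z_{n,q}$ is the normalizing constant (for $q=1$ this is the uniform measure). $\mathrm{LIS}(\pi)$ denotes the length of a longest increasing subsequence of $\pi$. *)

theory Defs
  imports "HOL-Analysis.Analysis" "HOL-Combinatorics.Permutations"
begin

definition perms :: "nat \<Rightarrow> (nat \<Rightarrow> nat) set" where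
  "perms n = {p. p permutes {1..n}}"

definition inversions :: "nat \<Rightarrow> (nat \<Rightarrow> nat) \<Rightarrow> nat" where
  "inversions n p = card {(i, j). i \<in> {1..n} \<and> j \<in> {1..n} \<and> i < j \<and> p i > p j}"

definition LIS :: "nat \<Rightarrow> (nat \<Rightarrow> nat) \<Rightarrow> nat" where
  "LIS n p = Max {card S | S. S \<subseteq> {1..n} \<and> (\<forall>i\<in>S. \<forall>j\<in>S. i < j \<longrightarrow> p i < p j)}"

definition mallows_Z :: "nat \<Rightarrow> real \<Rightarrow> real" where
  "mallows_Z n q = (\<Sum>p\<in>perms n. q ^ inversions n p)"

definition mallows_prob :: "nat \<Rightarrow> real \<Rightarrow> (nat \<Rightarrow> nat) \<Rightarrow> real" where
  "mallows_prob n q p = q ^ inversions n p / mallows_Z n q"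

definition mallows_expect :: "nat \<Rightarrow> real \<Rightarrow> ((nat \<Rightarrow> nat) \<Rightarrow> real) \<Rightarrow> real" where
  "mallows_expect n q f = (\<Sum>p\<in>perms n. f p * mallows_prob n q p)"

end

theory Submission
  imports Defs
begin

definition Cs :: "nat \<Rightarrow> (nat \<Rightarrow> nat) \<Rightarrow> nat \<Rightarrow> nat set" where
  "Cs n p x = {y\<in>{1..n}. x < y \<and> p y < p x}"

lemma inversions_sum: "inversions n p = (\<Sum>x\<in>{1..n}. card (Cs n p x))"
proof -
  have "{(i, j). i \<in> {1..n} \<and> j \<in> {1..n} \<and> i < j \<and> p i > p j} = Sigma {1..n} (Cs n p)"
    by (auto simp: Cs_def)
  then show ?thesis unfolding inversions_def by (simp add: card_SigmaI Cs_def)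
qed

lemma swap_inv:
  assumes p: "p permutes {1..n}" and ij: "1 \<le> i" "i < j" "j \<le> n" and pj: "p j < p i"
    and btw: "\<And>k. i < k \<Longrightarrow> k < j \<Longrightarrow> p k < p j \<or> p i < p k"
  shows "inversions n (p \<circ> Transposition.transpose i j) + 1 = inversions n p"
proof -
  let ?t = "Transposition.transpose i j"
  let ?q = "p \<circ> ?t"
  have inj: "inj p" using p permutes_inj by blast
  have other: "card (Cs n ?q x) = card (Cs n p x)" if x: "x \<in> {1..n}" "x \<noteq> i" "x \<noteq> j" for x
  proof -
    consider "x < i" | "i < x" "x < j" | "j < x" using x by linarith
    then show ?thesis
    proof cases
      case 1
      have "Cs n ?q x = ?t ` Cs n p x"
      proof (intro set_eqI iffI)
        fix y assume "y \<in> Cs n ?q x"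
        then have "?t y \<in> Cs n p x" using 1 ij x
          by (auto simp: Cs_def Transposition.transpose_def split: if_splits)
        then show "y \<in> ?t ` Cs n p x" by (metis image_eqI transpose_involutory)
      next
        fix y assume "y \<in> ?t ` Cs n p x"
        then show "y \<in> Cs n ?q x" using 1 ij x
          by (auto simp: Cs_def Transposition.transpose_def split: if_splits)
      qed
      then show ?thesis by (simp add: card_image inj_on_transpose)
    next
      case 2
      have a: "p i < p x \<longleftrightarrow> p j < p x" using btw[OF 2] pj inj x
        by (metis inj_eq less_trans not_less_iff_gr_or_eq)
      have "Cs n ?q x = Cs n p x" using 2 x ij a
        by (auto simp: Cs_def Transposition.transpose_def split: if_splits)
      then show ?thesis by simp
    next
      case 3
      have "Cs n ?q x = Cs n p x" using 3 x ij
        by (auto simp: Cs_def Transposition.transpose_def split: if_splits)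
      then show ?thesis by simp
    qed
  qed
  define M where "M = {y\<in>{1..n}. i < y \<and> y < j \<and> p y < p i}"
  have M2: "M = {y\<in>{1..n}. i < y \<and> y < j \<and> p y < p j}"
    unfolding M_def using btw pj by fastforce
  have e1: "Cs n p i = insert j (M \<union> Cs n ?q j)"
    using ij pj unfolding M_def Cs_def by (auto simp: Transposition.transpose_def)
  have e2: "Cs n ?q i = M \<union> Cs n p j"
    using ij pj unfolding M2 Cs_def by (auto simp: Transposition.transpose_def split: if_splits)
  have fin: "finite M" "finite (Cs n ?q j)" "finite (Cs n p j)"
    by (auto simp: M_def Cs_def)
  have c1: "card (Cs n p i) = 1 + card M + card (Cs n ?q j)"
  proof -
    have d: "M \<inter> Cs n ?q j = {}" using ij by (auto simp: M_def Cs_def)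
    have "j \<notin> M \<union> Cs n ?q j" by (auto simp: M_def Cs_def)
    then have "card (Cs n p i) = Suc (card (M \<union> Cs n ?q j))" unfolding e1 using fin by simp
    also have "card (M \<union> Cs n ?q j) = card M + card (Cs n ?q j)" by (rule card_Un_disjoint[OF fin(1) fin(2) d])
    finally show ?thesis by simp
  qed
  have c2: "card (Cs n ?q i) = card M + card (Cs n p j)"
    unfolding e2 using fin by (subst card_Un_disjoint) (auto simp: M_def Cs_def)
  have S: "{1..n} = insert i (insert j ({1..n} - {i, j}))" using ij by auto
  have "inversions n ?q = card (Cs n ?q i) + card (Cs n ?q j) + (\<Sum>x\<in>{1..n} - {i,j}. card (Cs n ?q x))"
    unfolding inversions_sum by (subst S) (use ij in auto)
  moreover have "inversions n p = card (Cs n p i) + card (Cs n p j) + (\<Sum>x\<in>{1..n} - {i,j}. card (Cs n p x))"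
    unfolding inversions_sum by (subst S) (use ij in auto)
  moreover have "(\<Sum>x\<in>{1..n} - {i,j}. card (Cs n ?q x)) = (\<Sum>x\<in>{1..n} - {i,j}. card (Cs n p x))"
    by (rule sum.cong) (auto intro: other)
  ultimately show ?thesis using c1 c2 by simp
qed


lemma perms_fin: "finite (perms n)"
  unfolding perms_def by (simp add: finite_permutations)

lemma id_perms: "id \<in> perms n"
  unfolding perms_def by (simp add: permutes_id)

lemma Z_pos: assumes "q > 0" shows "mallows_Z n q > 0"
proof -
  have "q ^ inversions n id \<le> mallows_Z n q"
    unfolding mallows_Z_def using assms
    by (intro member_le_sum[OF id_perms _ perms_fin]) auto
  moreover have "q ^ inversions n id > 0" using assms by simp
  ultimately show ?thesis by linarith
qed

lemma bad_weight:
  assumes q: "q > 0" and i: "i \<in> {1..n}"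
  shows "(\<Sum>p\<in>{p\<in>perms n. \<not> (\<forall>j\<in>{1..n}. i < j \<longrightarrow> p i < p j)}. q ^ inversions n p)
         \<le> q * mallows_Z n q"
proof -
  define B where "B = {p\<in>perms n. \<not> (\<forall>j\<in>{1..n}. i < j \<longrightarrow> p i < p j)}"
  define P where "P (p::nat\<Rightarrow>nat) j \<longleftrightarrow> j\<in>{1..n} \<and> i<j \<and> p j < p i \<and> (\<forall>k\<in>{1..n}. i < k \<and> p k < p i \<longrightarrow> p k \<le> p j)" for p j
  define jm where "jm p = (SOME j. P p j)" for p
  define f where "f p = p \<circ> Transposition.transpose i (jm p)" for p
  have jm: "P p (jm p)" if pB: "p \<in> B" for p
  proof -
    have pp: "p permutes {1..n}" using pB by (simp add: B_def perms_def)
    have inj: "inj p" using pp permutes_inj by blast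
    define K where "K = {j\<in>{1..n}. i<j \<and> p j < p i}"
    have "K \<noteq> {}"
    proof -
      obtain j where j: "j\<in>{1..n}" "i < j" "\<not> p i < p j" using pB i by (auto simp: B_def)
      then have "p j < p i" using inj by (metis injD nat_neq_iff less_irrefl)
      then show ?thesis using j unfolding K_def by blast
    qed
    moreover have "finite K" by (simp add: K_def)
    ultimately have "Max (p ` K) \<in> p ` K" by simp
    then obtain j where j: "j \<in> K" "p j = Max (p ` K)" by auto
    have "\<forall>k\<in>K. p k \<le> p j" using j \<open>finite K\<close> by simp
    then have "P p j" using j(1) unfolding P_def K_def by blast
    then show ?thesis unfolding jm_def by (rule someI)
  qed
  have key: "inversions n (f p) + 1 = inversions n p \<and> f p \<in> perms n" if "p \<in> B" for p
  proof -
    have pp: "p permutes {1..n}" using that by (simp add: B_def perms_def)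
    have inj: "inj p" using pp permutes_inj by blast
    have J: "P p (jm p)" using jm that by blast
    have "inversions n (p \<circ> Transposition.transpose i (jm p)) + 1 = inversions n p"
    proof (rule swap_inv[OF pp])
      show "1 \<le> i" "i < jm p" "jm p \<le> n" "p (jm p) < p i" using i J by (auto simp: P_def)
      fix k assume k: "i < k" "k < jm p"
      have kn: "k \<in> {1..n}" using k i J by (auto simp: P_def)
      show "p k < p (jm p) \<or> p i < p k"
      proof (rule ccontr)
        assume "\<not> ?thesis"
        then have h: "p (jm p) \<le> p k" "p k \<le> p i" by auto
        have "p k \<noteq> p i" using inj k by (metis injD less_irrefl)
        then have "p k \<le> p (jm p)" using J kn k h by (auto simp: P_def)
        then have "p k = p (jm p)" using h by simp
        then show False using inj k by (metis injD less_irrefl)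
      qed
    qed
    moreover have "f p \<in> perms n" unfolding f_def perms_def
      using J i pp by (auto simp: P_def intro!: permutes_compose permutes_swap_id)
    ultimately show ?thesis unfolding f_def by simp
  qed
  have charact: "jm p = j" if p: "p \<in> B" and j: "j \<in> {1..n}" "i < j" "f p i < f p j"
      "\<forall>k\<in>{1..n}. i < k \<and> f p i < f p k \<longrightarrow> f p j \<le> f p k" for p j
  proof -
    have pp: "p permutes {1..n}" using p by (simp add: B_def perms_def)
    have inj: "inj p" using pp permutes_inj by blast
    have J: "P p (jm p)" using jm p by blast
    let ?m = "jm p"
    have m: "?m \<in> {1..n}" "i < ?m" "p ?m < p i" using J by (auto simp: P_def)
    have fi: "f p i = p ?m" and fm: "f p ?m = p i" using m by (auto simp: f_def)
    have fo: "f p k = p k" if "k \<noteq> i" "k \<noteq> ?m" for k using that by (auto simp: f_def)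
    have c1: "f p j \<le> f p ?m" using j(4) m fi fm by auto
    have c2: "f p ?m \<le> f p j"
    proof (cases "j = ?m")
      case True then show ?thesis by simp
    next
      case False
      have ji: "j \<noteq> i" using j by simp
      have "p j > p ?m" using j fi fo[OF ji False] by simp
      moreover have "p j \<noteq> p i" using inj ji by (metis injD)
      moreover have "p j < p i \<longrightarrow> p j \<le> p ?m" using J j by (auto simp: P_def)
      ultimately have "p i < p j" by auto
      then show ?thesis using fm fo[OF ji False] by simp
    qed
    have "f p j = f p ?m" using c1 c2 by simp
    moreover have "inj (f p)" unfolding f_def using inj by (simp add: inj_compose inj_transpose)
    ultimately show ?thesis by (metis injD)
  qed
  have injf: "inj_on f B"
  proof (rule inj_onI)
    fix p1 p2 assume p1: "p1 \<in> B" and p2: "p2 \<in> B" and e: "f p1 = f p2"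
    have J1: "P p1 (jm p1)" using jm p1 by blast
    have pp1: "p1 permutes {1..n}" using p1 by (simp add: B_def perms_def)
    have inj1: "inj p1" using pp1 permutes_inj by blast
    let ?m = "jm p1"
    have m: "?m \<in> {1..n}" "i < ?m" "p1 ?m < p1 i" using J1 by (auto simp: P_def)
    have fi: "f p1 i = p1 ?m" and fm: "f p1 ?m = p1 i" using m by (auto simp: f_def)
    have "\<forall>k\<in>{1..n}. i < k \<and> f p1 i < f p1 k \<longrightarrow> f p1 ?m \<le> f p1 k"
    proof (intro ballI impI)
      fix k assume k: "k \<in> {1..n}" "i < k \<and> f p1 i < f p1 k"
      show "f p1 ?m \<le> f p1 k"
      proof (cases "k = ?m")
        case True then show ?thesis by simp
      next
        case False
        have fk: "f p1 k = p1 k" using False k by (auto simp: f_def)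
        have "p1 k \<noteq> p1 i" using inj1 k by (metis injD less_irrefl)
        moreover have "p1 k < p1 i \<longrightarrow> p1 k \<le> p1 ?m" using J1 k by (auto simp: P_def)
        ultimately show ?thesis using fk fi fm k by auto
      qed
    qed
    then have "jm p2 = ?m" using charact[OF p2, of ?m] m fi fm e by auto
    then have "f p1 \<circ> Transposition.transpose i ?m = p1" and "f p2 \<circ> Transposition.transpose i ?m = p2"
      unfolding f_def by (auto simp: comp_assoc)
    then show "p1 = p2" using e by metis
  qed
  have "(\<Sum>p\<in>B. q ^ inversions n p) = (\<Sum>p\<in>B. q * q ^ inversions n (f p))"
  proof (rule sum.cong)
    fix p assume "p \<in> B"
    then have "inversions n p = Suc (inversions n (f p))" using key by simp
    then show "q ^ inversions n p = q * q ^ inversions n (f p)" by simp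
  qed simp
  also have "\<dots> = q * (\<Sum>p\<in>B. q ^ inversions n (f p))" by (simp add: sum_distrib_left)
  also have "(\<Sum>p\<in>B. q ^ inversions n (f p)) = (\<Sum>p\<in>f ` B. q ^ inversions n p)"
    by (simp add: sum.reindex[OF injf])
  also have "\<dots> \<le> mallows_Z n q" unfolding mallows_Z_def
    using key q perms_fin by (intro sum_mono2) auto
  finally show ?thesis unfolding B_def using q by simp
qed


lemma LIS_ge:
  assumes "p permutes {1..n}"
  shows "card {i\<in>{1..n}. \<forall>j\<in>{1..n}. i < j \<longrightarrow> p i < p j} \<le> LIS n p"
proof -
  let ?R = "{i\<in>{1..n}. \<forall>j\<in>{1..n}. i < j \<longrightarrow> p i < p j}"
  have fin: "finite {card S | S. S \<subseteq> {1..n} \<and> (\<forall>i\<in>S. \<forall>j\<in>S. i < j \<longrightarrow> p i < p j)}"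
    by (rule finite_subset[of _ "card ` Pow {1..n}"]) auto
  have "card ?R \<in> {card S | S. S \<subseteq> {1..n} \<and> (\<forall>i\<in>S. \<forall>j\<in>S. i < j \<longrightarrow> p i < p j)}"
    by blast
  then show ?thesis unfolding LIS_def using fin by (rule Max_ge[rotated])
qed

lemma LIS_le:
  assumes pp: "p permutes {1..n}"
  shows "LIS n p + card {i\<in>{1..<n}. p (i+1) < p i} \<le> n"
proof -
  define D where "D = {i\<in>{1..<n}. p (i+1) < p i}"
  define A where "A = {1..n} - D"
  have DA: "D \<subseteq> {1..n}" by (auto simp: D_def)
  have cardA: "card A = n - card D" unfolding A_def using DA by (simp add: card_Diff_subset finite_subset)
  have cD: "card D \<le> n" using DA by (metis card_atLeastAtMost card_mono diff_Suc_1 finite_atLeastAtMost)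
  have main: "card S \<le> card A" if S: "S \<subseteq> {1..n}" "\<forall>i\<in>S. \<forall>j\<in>S. i < j \<longrightarrow> p i < p j" for S
  proof -
    define g where "g i = (LEAST r. i \<le> r \<and> r \<in> A)" for i
    have gA: "i \<le> g i \<and> g i \<in> A" if "i \<in> S" for i
    proof -
      have "i \<le> n \<and> n \<in> A" using that S by (auto simp: A_def D_def)
      then show ?thesis unfolding g_def by (rule LeastI)
    qed
    have dec: "\<forall>k. i < k \<and> k \<le> g i \<longrightarrow> p k < p i" if i: "i \<in> S" for i
    proof -
      have step: "p (k+1) < p k" if "i \<le> k" "k < g i" for k
      proof -
        have "k \<notin> A" using that not_less_Least unfolding g_def by blast
        moreover have "k \<in> {1..n}" using that gA[OF i] S i by (auto simp: A_def)
        ultimately show ?thesis by (auto simp: A_def D_def)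
      qed
      have "p (i + Suc d) < p i" if "i + Suc d \<le> g i" for d
        using that
      proof (induction d)
        case 0 then show ?case using step[of i] by simp
      next
        case (Suc d)
        then have "p (i + Suc d) < p i" by simp
        moreover have "p (i + Suc d + 1) < p (i + Suc d)" using step[of "i + Suc d"] Suc.prems by simp
        ultimately show ?case by simp
      qed
      then show ?thesis by (metis add_Suc_right less_imp_Suc_add)
    qed
    have "inj_on g S"
    proof (rule inj_onI)
      fix a b assume a: "a \<in> S" and b: "b \<in> S" and e: "g a = g b"
      show "a = b"
      proof (rule ccontr)
        assume "a \<noteq> b"
        then consider "a < b" | "b < a" by linarith
        then show False
        proof cases
          case 1
          have "p b < p a" using dec[OF a] 1 gA[OF b] e by simp
          then show False using S(2) a b 1 by fastforce
        next
          case 2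
          have "p a < p b" using dec[OF b] 2 gA[OF a] e by simp
          then show False using S(2) a b 2 by fastforce
        qed
      qed
    qed
    moreover have "g ` S \<subseteq> A" using gA by auto
    moreover have "finite A" by (simp add: A_def)
    ultimately show ?thesis by (rule card_inj_on_le)
  qed
  have fin: "finite {card S | S. S \<subseteq> {1..n} \<and> (\<forall>i\<in>S. \<forall>j\<in>S. i < j \<longrightarrow> p i < p j)}"
    by (rule finite_subset[of _ "card ` Pow {1..n}"]) auto
  have ne: "{card S | S. S \<subseteq> {1..n} \<and> (\<forall>i\<in>S. \<forall>j\<in>S. i < j \<longrightarrow> p i < p j)} \<noteq> {}" by blast
  have "LIS n p \<le> card A" unfolding LIS_def using fin ne main by (auto simp: Max_le_iff)
  then show ?thesis using cardA cD unfolding D_def[symmetric] by linarith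
qed

lemma desc_weight:
  assumes q: "q > 0" and i: "1 \<le> i" "i < n"
  shows "(1 + q) * (\<Sum>p\<in>{p\<in>perms n. p (i+1) < p i}. q ^ inversions n p) = q * mallows_Z n q"
proof -
  define Ds where "Ds = {p\<in>perms n. p (i+1) < p i}"
  define As where "As = {p\<in>perms n. p i < p (i+1)}"
  define s where "s p = p \<circ> Transposition.transpose i (i+1)" for p :: "nat \<Rightarrow> nat"
  have ss: "s (s p) = p" for p unfolding s_def by (simp add: comp_assoc)
  have sperm: "s p \<in> perms n" if "p \<in> perms n" for p
    using that i unfolding s_def perms_def by (auto intro!: permutes_compose permutes_swap_id)
  have inv: "inversions n (s p) + 1 = inversions n p" if "p \<in> Ds" for p
    unfolding s_def
    by (rule swap_inv) (use that i in \<open>auto simp: Ds_def perms_def\<close>)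
  have sD: "s ` Ds = As"
  proof
    show "s ` Ds \<subseteq> As" using sperm by (auto simp: Ds_def As_def s_def)
    show "As \<subseteq> s ` Ds"
    proof
      fix p assume p: "p \<in> As"
      then have "s p \<in> Ds" using sperm by (auto simp: Ds_def As_def s_def)
      then show "p \<in> s ` Ds" using ss by (metis image_eqI)
    qed
  qed
  have injs: "inj_on s Ds" by (metis inj_onI ss)
  have "(\<Sum>p\<in>Ds. q ^ inversions n p) = (\<Sum>p\<in>Ds. q * q ^ inversions n (s p))"
  proof (rule sum.cong)
    fix p assume "p \<in> Ds"
    then have "inversions n p = Suc (inversions n (s p))" using inv by simp
    then show "q ^ inversions n p = q * q ^ inversions n (s p)" by simp
  qed simp
  also have "\<dots> = q * (\<Sum>p\<in>Ds. q ^ inversions n (s p))"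
    by (simp add: sum_distrib_left)
  also have "(\<Sum>p\<in>Ds. q ^ inversions n (s p)) = (\<Sum>p\<in>s ` Ds. q ^ inversions n p)"
    by (simp add: sum.reindex[OF injs])
  also have "\<dots> = (\<Sum>p\<in>As. q ^ inversions n p)" by (simp add: sD)
  finally have e1: "(\<Sum>p\<in>Ds. q ^ inversions n p) = q * (\<Sum>p\<in>As. q ^ inversions n p)" .
  have ne: "p i \<noteq> p (i+1)" if "p \<in> perms n" for p
  proof
    assume "p i = p (i+1)"
    moreover have "inj p" using that permutes_inj[of p "{1..n}"] by (simp add: perms_def)
    ultimately have "i = i + 1" by (rule injD[rotated])
    then show False by simp
  qed
  have part1: "perms n = As \<union> Ds"
  proof (rule set_eqI)
    fix p
    show "p \<in> perms n \<longleftrightarrow> p \<in> As \<union> Ds"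
    proof
      assume p: "p \<in> perms n"
      then have "p i < p (i+1) \<or> p (i+1) < p i" using ne[OF p] by linarith
      then show "p \<in> As \<union> Ds" using p unfolding As_def Ds_def by blast
    qed (auto simp: As_def Ds_def)
  qed
  have part2: "As \<inter> Ds = {}" unfolding As_def Ds_def by auto
  have finA: "finite As" "finite Ds" unfolding As_def Ds_def using perms_fin[of n] by auto
  have "mallows_Z n q = (\<Sum>p\<in>As. q ^ inversions n p) + (\<Sum>p\<in>Ds. q ^ inversions n p)"
    unfolding mallows_Z_def part1 by (rule sum.union_disjoint[OF finA part2])
  then show ?thesis using e1 unfolding Ds_def[symmetric] by (simp add: algebra_simps)
qed


lemma card_filter_real: "finite A \<Longrightarrow> real (card {x\<in>A. P x}) = (\<Sum>x\<in>A. if P x then 1 else 0)"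
  by (simp add: sum.inter_filter[symmetric])

lemma swap_count:
  assumes "finite A"
  shows "(\<Sum>p\<in>perms n. real (card {i\<in>A. P i p}) * w p) = (\<Sum>i\<in>A. \<Sum>p\<in>{p\<in>perms n. P i p}. w p)"
proof -
  have "(\<Sum>p\<in>perms n. real (card {i\<in>A. P i p}) * w p) = (\<Sum>p\<in>perms n. \<Sum>i\<in>A. if P i p then w p else 0)"
  proof (rule sum.cong)
    fix p assume "p \<in> perms n"
    have "real (card {i\<in>A. P i p}) * w p = (\<Sum>i\<in>A. (if P i p then 1 else 0) * w p)"
      using assms by (simp add: card_filter_real sum_distrib_right)
    also have "\<dots> = (\<Sum>i\<in>A. if P i p then w p else 0)" by (rule sum.cong) auto
    finally show "real (card {i\<in>A. P i p}) * w p = (\<Sum>i\<in>A. if P i p then w p else 0)" .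
  qed simp
  also have "\<dots> = (\<Sum>i\<in>A. \<Sum>p\<in>perms n. if P i p then w p else 0)" by (rule sum.swap)
  also have "\<dots> = (\<Sum>i\<in>A. \<Sum>p\<in>{p\<in>perms n. P i p}. w p)"
    using perms_fin by (simp add: sum.inter_filter)
  finally show ?thesis .
qed

theorem proposition1p4:
  fixes n :: nat and q :: real
  assumes "n \<ge> 1" and "0 < q" and "q \<le> 1"
  shows "real n * (1 - q) \<le> mallows_expect n q (\<lambda>p. real (LIS n p))
         \<and> mallows_expect n q (\<lambda>p. real (LIS n p)) \<le> real n - q / (1 + q) * (real n - 1)"
proof -
  define Z where "Z = mallows_Z n q"
  define w where "w p = q ^ inversions n p" for p
  have Zp: "Z > 0" unfolding Z_def using Z_pos assms by blast
  have wnn: "w p \<ge> 0" for p unfolding w_def using assms by simp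
  have E: "mallows_expect n q (\<lambda>p. real (LIS n p)) = (\<Sum>p\<in>perms n. real (LIS n p) * w p) / Z"
    unfolding mallows_expect_def mallows_prob_def Z_def w_def by (simp add: sum_divide_distrib)
  have Zs: "Z = (\<Sum>p\<in>perms n. w p)" unfolding Z_def mallows_Z_def w_def ..
  define G where "G i p \<longleftrightarrow> (\<forall>j\<in>{1..n}. i < j \<longrightarrow> p i < p j)" for i and p :: "nat \<Rightarrow> nat"
  have low: "real n * (1 - q) * Z \<le> (\<Sum>p\<in>perms n. real (LIS n p) * w p)"
  proof -
    have "(\<Sum>p\<in>perms n. real (card {i\<in>{1..n}. G i p}) * w p) \<le> (\<Sum>p\<in>perms n. real (LIS n p) * w p)"
    proof (rule sum_mono)
      fix p assume "p \<in> perms n"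
      then have "card {i\<in>{1..n}. G i p} \<le> LIS n p" unfolding G_def perms_def by (intro LIS_ge) simp
      then show "real (card {i\<in>{1..n}. G i p}) * w p \<le> real (LIS n p) * w p"
        using wnn by (intro mult_right_mono) auto
    qed
    moreover have "(\<Sum>p\<in>perms n. real (card {i\<in>{1..n}. G i p}) * w p) = (\<Sum>i\<in>{1..n}. \<Sum>p\<in>{p\<in>perms n. G i p}. w p)"
      by (rule swap_count) simp
    moreover have "(1 - q) * Z \<le> (\<Sum>p\<in>{p\<in>perms n. G i p}. w p)" if i: "i \<in> {1..n}" for i
    proof -
      have "Z = (\<Sum>p\<in>{p\<in>perms n. G i p}. w p) + (\<Sum>p\<in>{p\<in>perms n. \<not> G i p}. w p)"
      proof -
        have u: "perms n = {p\<in>perms n. G i p} \<union> {p\<in>perms n. \<not> G i p}" by blast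
        show ?thesis unfolding Zs
          by (subst u, rule sum.union_disjoint) (use perms_fin[of n] in auto)
      qed
      moreover have "(\<Sum>p\<in>{p\<in>perms n. \<not> G i p}. w p) \<le> q * Z"
        using bad_weight[OF assms(2) i] unfolding G_def w_def Z_def by simp
      ultimately show ?thesis by (simp add: algebra_simps)
    qed
    then have "(\<Sum>i\<in>{1..n}. (1 - q) * Z) \<le> (\<Sum>i\<in>{1..n}. \<Sum>p\<in>{p\<in>perms n. G i p}. w p)"
      by (rule sum_mono)
    ultimately show ?thesis by simp
  qed
  define Dd where "Dd i p \<longleftrightarrow> p (i+1) < p i" for i and p :: "nat \<Rightarrow> nat"
  have up: "(\<Sum>p\<in>perms n. real (LIS n p) * w p) \<le> real n * Z - (real n - 1) * (q * Z / (1 + q))"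
  proof -
    have "(\<Sum>p\<in>perms n. real (LIS n p) * w p) \<le> (\<Sum>p\<in>perms n. (real n - real (card {i\<in>{1..<n}. Dd i p})) * w p)"
    proof (rule sum_mono)
      fix p assume "p \<in> perms n"
      then have "LIS n p + card {i\<in>{1..<n}. Dd i p} \<le> n" unfolding Dd_def perms_def by (intro LIS_le) simp
      then have "real (LIS n p) \<le> real n - real (card {i\<in>{1..<n}. Dd i p})" by linarith
      then show "real (LIS n p) * w p \<le> (real n - real (card {i\<in>{1..<n}. Dd i p})) * w p"
        using wnn by (intro mult_right_mono) auto
    qed
    also have "\<dots> = real n * Z - (\<Sum>p\<in>perms n. real (card {i\<in>{1..<n}. Dd i p}) * w p)"
      unfolding Zs by (simp add: left_diff_distrib sum_subtractf sum_distrib_left)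
    also have "(\<Sum>p\<in>perms n. real (card {i\<in>{1..<n}. Dd i p}) * w p) = (\<Sum>i\<in>{1..<n}. \<Sum>p\<in>{p\<in>perms n. Dd i p}. w p)"
      by (rule swap_count) simp
    also have "\<dots> = (\<Sum>i\<in>{1..<n}. q * Z / (1 + q))"
    proof (rule sum.cong)
      fix i assume i: "i \<in> {1..<n}"
      have "(1 + q) * (\<Sum>p\<in>{p\<in>perms n. Dd i p}. w p) = q * Z"
        using desc_weight[OF assms(2), of i n] i unfolding Dd_def w_def Z_def by simp
      then show "(\<Sum>p\<in>{p\<in>perms n. Dd i p}. w p) = q * Z / (1 + q)"
        using assms(2) by (simp add: field_simps)
    qed simp
    also have "\<dots> = (real n - 1) * (q * Z / (1 + q))" using assms(1) by (simp add: of_nat_diff)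
    finally show ?thesis .
  qed
  have "real n * (1 - q) \<le> (\<Sum>p\<in>perms n. real (LIS n p) * w p) / Z"
    using low Zp by (simp add: pos_le_divide_eq)
  moreover have "(\<Sum>p\<in>perms n. real (LIS n p) * w p) / Z \<le> real n - q / (1 + q) * (real n - 1)"
  proof -
    have "(real n * Z - (real n - 1) * (q * Z / (1 + q))) / Z = real n - q / (1 + q) * (real n - 1)"
      using Zp by (simp add: field_simps)
    then show ?thesis using up Zp by (metis divide_right_mono less_imp_le)
  qed
  ultimately show ?thesis unfolding E by simp
qed

end
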